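(* Let $n,m>3$ be integers and let $\psi$ be an automorphism of $\mathcal{CSR}(m,n)$, and suppose $\psi_1,\dots,\psi_m$ are permutations of $\mathbb{Z}_n$ and $\sigma$ is a permutation of $[m]$ such that $\psi\big(\sum_i x_ie_i\big)=\sum_i\psi_i(x_i)e_{\sigma(i)}$ for every vertex. Then there exist $d_1,\dots,d_m\in\mathbb{Z}_n$ such that the functions $\psi_1+d_1,\dots,\psi_m+d_m$ on $\mathbb{Z}_n$ are all equal.
   Context: For positive integers $m,n$, the cyclic simplicial rook graph $\mathcal{CSR}(m,n)$ is the graph whose vertices are the vectors $(a_1,\dots,a_m)\in\mathbb{Z}_n^m$ with $a_1+\cdots+a_m\equiv 0 \pmod n$, two vertices being adjacent if and only if their vectors differ in exactly two coordinates. $[m]=\{1,\dots,m\}$ and $e_i\in\mathbb{Z}_n^m$ is the vector with $1$ in coordinate $i$ and $0$ elsewhere. For a function $f:\mathbb{Z}_n\to\mathbb{Z}_n$ and $d\in\mathbb{Z}_n$, $f+d$ denotes $x\mapsto f(x)+d$. *)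

theory Defs
  imports Main
begin

definition csr_vertices :: "nat \<Rightarrow> int \<Rightarrow> (nat \<Rightarrow> int) set" where
  "csr_vertices m n = {a. (\<forall>i<m. a i \<in> {0..<n}) \<and> (\<forall>i. m \<le> i \<longrightarrow> a i = 0)
                          \<and> (\<Sum>i<m. a i) mod n = 0}"

definition csr_adj :: "nat \<Rightarrow> (nat \<Rightarrow> int) \<Rightarrow> (nat \<Rightarrow> int) \<Rightarrow> bool" where
  "csr_adj m a b \<longleftrightarrow> card {i. i < m \<and> a i \<noteq> b i} = 2"

definition csr_automorphism :: "nat \<Rightarrow> int \<Rightarrow> ((nat \<Rightarrow> int) \<Rightarrow> (nat \<Rightarrow> int)) \<Rightarrow> bool" where
  "csr_automorphism m n \<psi> \<longleftrightarrow>
     bij_betw \<psi> (csr_vertices m n) (csr_vertices m n) \<and>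
     (\<forall>a\<in>csr_vertices m n. \<forall>b\<in>csr_vertices m n. csr_adj m a b \<longleftrightarrow> csr_adj m (\<psi> a) (\<psi> b))"

end

theory Submission
  imports Defs
begin

lemma split2:
  fixes f :: "nat \<Rightarrow> int"
  assumes "finite A" "i \<in> A" "j \<in> A" "i \<noteq> j"
  shows "sum f A = f i + f j + sum f (A - {i} - {j})"
proof -
  have "sum f A = f i + sum f (A - {i})" using assms by (simp add: sum.remove)
  also have "sum f (A - {i}) = f j + sum f (A - {i} - {j})" using assms by (simp add: sum.remove)
  finally show ?thesis by simp
qed

lemma sum_diff_two:
  fixes f g :: "nat \<Rightarrow> int"
  assumes "finite A" "i \<in> A" "j \<in> A" "i \<noteq> j" "\<forall>l\<in>A - {i} - {j}. f l = g l"
  shows "sum f A - sum g A = f i + f j - g i - g j"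
proof -
  have "sum f (A - {i} - {j}) = sum g (A - {i} - {j})" using assms(5) by (intro sum.cong) auto
  thus ?thesis using split2[OF assms(1-4), of f] split2[OF assms(1-4), of g] by simp
qed

lemma sum_two_supp:
  fixes f :: "nat \<Rightarrow> int"
  assumes "i < m" "k < m" "i \<noteq> k" "\<forall>l. l \<noteq> i \<and> l \<noteq> k \<longrightarrow> f l = 0"
  shows "(\<Sum>l<m. f l) = f i + f k"
proof -
  have "(\<Sum>l<m. f l) = sum f {i,k}"
    by (rule sum.mono_neutral_right) (use assms in auto)
  thus ?thesis using assms by simp
qed

theorem lemma7:
  fixes m :: nat and n :: int
    and \<psi> :: "(nat \<Rightarrow> int) \<Rightarrow> (nat \<Rightarrow> int)"
    and \<psi>s :: "nat \<Rightarrow> int \<Rightarrow> int"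
    and \<sigma> :: "nat \<Rightarrow> nat"
  assumes "m > 3" and "n > 3"
    and "csr_automorphism m n \<psi>"
    and "\<forall>i<m. bij_betw (\<psi>s i) {0..<n} {0..<n}"
    and "bij_betw \<sigma> {..<m} {..<m}"
    and "\<forall>x\<in>csr_vertices m n. \<forall>i<m. \<psi> x (\<sigma> i) = \<psi>s i (x i)"
  shows "\<exists>d :: nat \<Rightarrow> int. \<forall>i<m. \<forall>j<m. \<forall>x\<in>{0..<n}.
           (\<psi>s i x + d i) mod n = (\<psi>s j x + d j) mod n"
proof -
  have key: "(\<Sum>l<m. \<psi>s l (v l)) mod n = 0" if v: "v \<in> csr_vertices m n" for v
  proof -
    have "\<psi> v \<in> csr_vertices m n" using assms(3) v
      unfolding csr_automorphism_def bij_betw_def by auto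
    hence "(\<Sum>l<m. \<psi> v l) mod n = 0" unfolding csr_vertices_def by auto
    moreover have "(\<Sum>l<m. \<psi> v l) = (\<Sum>l<m. \<psi> v (\<sigma> l))"
      using sum.reindex_bij_betw[OF assms(5), of "\<psi> v"] by simp
    moreover have "(\<Sum>l<m. \<psi> v (\<sigma> l)) = (\<Sum>l<m. \<psi>s l (v l))"
      using assms(6) v by simp
    ultimately show ?thesis by simp
  qed
  have main: "(\<psi>s i x + \<psi>s j 0) mod n = (\<psi>s i 0 + \<psi>s j x) mod n"
    if ij: "i < m" "j < m" "i \<noteq> j" and x: "x \<in> {0..<n}" for i j x
  proof -
    obtain k where k: "k < m" "k \<noteq> i" "k \<noteq> j"
    proof -
      have "{..<m} - {i,j} \<noteq> {}"
      proof
        assume "{..<m} - {i,j} = {}"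
        hence "card {..<m} \<le> card {i,j}" by (intro card_mono) auto
        also have "\<dots> \<le> 2" by (simp add: card_insert_if)
        finally show False using assms(1) by simp
      qed
      thus ?thesis using that by auto
    qed
    define c where "c = (- x) mod n"
    have c: "c \<in> {0..<n}" using assms(2) unfolding c_def by simp
    have xc: "(x + c) mod n = 0" unfolding c_def by (metis add.right_inverse mod_add_right_eq mod_0)
    define v1 where "v1 = (\<lambda>l. if l = i then x else if l = k then c else 0)"
    define v2 where "v2 = (\<lambda>l. if l = j then x else if l = k then c else 0)"
    have s1: "(\<Sum>l<m. v1 l) = x + c"
    proof -
      have z: "\<forall>l. l \<noteq> i \<and> l \<noteq> k \<longrightarrow> v1 l = 0" unfolding v1_def by simp
      have "v1 i = x" "v1 k = c" using k unfolding v1_def by simp_all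
      thus ?thesis using sum_two_supp[of i m k v1, OF _ _ _ z] ij k by simp
    qed
    have s2: "(\<Sum>l<m. v2 l) = x + c"
    proof -
      have z: "\<forall>l. l \<noteq> j \<and> l \<noteq> k \<longrightarrow> v2 l = 0" unfolding v2_def by simp
      have "v2 j = x" "v2 k = c" using k unfolding v2_def by simp_all
      thus ?thesis using sum_two_supp[of j m k v2, OF _ _ _ z] ij k by simp
    qed
    have v1: "v1 \<in> csr_vertices m n"
      unfolding csr_vertices_def
    proof (intro CollectI conjI allI impI)
      fix l show "l < m \<Longrightarrow> v1 l \<in> {0..<n}" using x c unfolding v1_def by simp
      show "m \<le> l \<Longrightarrow> v1 l = 0" using ij k unfolding v1_def by simp
    next show "(\<Sum>l<m. v1 l) mod n = 0" using s1 xc by simp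
    qed
    have v2: "v2 \<in> csr_vertices m n"
      unfolding csr_vertices_def
    proof (intro CollectI conjI allI impI)
      fix l show "l < m \<Longrightarrow> v2 l \<in> {0..<n}" using x c unfolding v2_def by simp
      show "m \<le> l \<Longrightarrow> v2 l = 0" using ij k unfolding v2_def by simp
    next show "(\<Sum>l<m. v2 l) mod n = 0" using s2 xc by simp
    qed
    have eqo: "\<forall>l\<in>{..<m} - {i} - {j}. \<psi>s l (v1 l) = \<psi>s l (v2 l)"
      unfolding v1_def v2_def by simp
    have d: "(\<Sum>l<m. \<psi>s l (v1 l)) - (\<Sum>l<m. \<psi>s l (v2 l))
        = \<psi>s i x + \<psi>s j 0 - \<psi>s i 0 - \<psi>s j x"
      using sum_diff_two[of "{..<m}" i j "\<lambda>l. \<psi>s l (v1 l)" "\<lambda>l. \<psi>s l (v2 l)", OF _ _ _ _ eqo] ij k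
      unfolding v1_def v2_def by simp
    have "n dvd (\<Sum>l<m. \<psi>s l (v1 l))" "n dvd (\<Sum>l<m. \<psi>s l (v2 l))"
      using key[OF v1] key[OF v2] by (simp_all add: dvd_eq_mod_eq_0)
    hence "n dvd (\<psi>s i x + \<psi>s j 0 - \<psi>s i 0 - \<psi>s j x)"
      using d dvd_diff by metis
    hence "n dvd (\<psi>s i x + \<psi>s j 0) - (\<psi>s i 0 + \<psi>s j x)" by (simp add: algebra_simps)
    thus ?thesis by (simp only: mod_eq_dvd_iff)
  qed
  show ?thesis
  proof (intro exI[of _ "\<lambda>i. - \<psi>s i 0"] allI impI ballI)
    fix i j x assume "i < m" "j < m" "x \<in> {0..<n}"
    show "(\<psi>s i x + - \<psi>s i 0) mod n = (\<psi>s j x + - \<psi>s j 0) mod n"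
    proof (cases "i = j")
      case False
      have "n dvd (\<psi>s i x + \<psi>s j 0) - (\<psi>s i 0 + \<psi>s j x)"
        using main[OF \<open>i<m\<close> \<open>j<m\<close> False \<open>x \<in> _\<close>] by (simp only: mod_eq_dvd_iff)
      hence "n dvd (\<psi>s i x + - \<psi>s i 0) - (\<psi>s j x + - \<psi>s j 0)" by (simp add: algebra_simps)
      thus ?thesis by (simp only: mod_eq_dvd_iff)
    qed simp
  qed
qed

end
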